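(* Let $X$ be a Banach space (real or complex) with the alternative Daugavet property whose closed unit ball $B_X$ is an SCD set. Then $X$ is lush. In particular, every SCD Banach space with the alternative Daugavet property is lush.
   Context: $\mathbb{K}\in\{\mathbb{R},\mathbb{C}\}$ is the scalar field, $\mathbb{T}$ the set of scalars of modulus one, $S_X$ and $B_X$ the unit sphere and closed unit ball of $X$, $L(X)$ the bounded linear operators on $X$. For a convex bounded $A\subseteq X$, $x^*\in X^*$ and $\varepsilon>0$, the slice is $S(A,x^*,\varepsilon)=\{x\in A:\ \mathrm{Re}\,x^*(x)>\sup \mathrm{Re}\,x^*(A)-\varepsilon\}$. A convex bounded set $A\subseteq X$ is an SCD set if there is a sequence $(S_n)$ of slices of $A$ such that $A\subseteq\overline{\mathrm{conv}}(B)$ for every $B\subseteq A$ intersecting every $S_n$. A separable Banach space is an SCD space if every convex bounded subset of it is an SCD set. $X$ has the alternative Daugavet property if every rank-one $T\in L(X)$ satisfies $\max_{\theta\in\mathbb{T}}\|\mathrm{Id}+\theta T\|=1+\|T\|$. $X$ is lush if for every $x,y\in S_X$ and every $\varepsilon>0$ there is $x^*\in S_{X^*}$ such that the slice $S=S(B_X,x^*,\varepsilon)$ contains $x$ and $\mathrm{dist}(y,\mathrm{aconv}(S))<\varepsilon$, where $\mathrm{aconv}$ denotes the absolutely convex hull. *)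

theory Defs
  imports "HOL-Analysis.Analysis"
begin

class cbanach = banach +
  fixes scaleC :: "complex \<Rightarrow> 'a \<Rightarrow> 'a"
  assumes scaleC_of_real: "scaleC (complex_of_real r) x = r *\<^sub>R x"
    and scaleC_add_right: "scaleC a (x + y) = scaleC a x + scaleC a y"
    and scaleC_add_left: "scaleC (a + b) x = scaleC a x + scaleC b x"
    and scaleC_scaleC: "scaleC a (scaleC b x) = scaleC (a * b) x"
    and norm_scaleC: "norm (scaleC a x) = cmod a * norm x"

text \<open>Slice S(A, x*, eps), given through the real-valued map g = Re x*.\<close>
definition slice :: "'a set \<Rightarrow> ('a \<Rightarrow> real) \<Rightarrow> real \<Rightarrow> 'a set" where
  "slice A g \<epsilon> = {x \<in> A. g x > Sup (g ` A) - \<epsilon>}"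

definition dualR :: "('a::real_normed_vector \<Rightarrow> real) set" where
  "dualR = {f. bounded_linear f}"

definition SCD_set_R :: "'a::real_normed_vector set \<Rightarrow> bool" where
  "SCD_set_R A \<longleftrightarrow>
     (\<exists>(f :: nat \<Rightarrow> 'a \<Rightarrow> real) (\<epsilon> :: nat \<Rightarrow> real).
        (\<forall>n. f n \<in> dualR \<and> \<epsilon> n > 0) \<and>
        (\<forall>B. B \<subseteq> A \<longrightarrow> (\<forall>n. B \<inter> slice A (f n) (\<epsilon> n) \<noteq> {})
              \<longrightarrow> A \<subseteq> closure (convex hull B)))"

definition alt_daugavet_R :: "'a::real_normed_vector itself \<Rightarrow> bool" where
  "alt_daugavet_R _ \<longleftrightarrow>
     (\<forall>T :: 'a \<Rightarrow> 'a. bounded_linear T \<and> dim (range T) = 1 \<longrightarrow>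
        (SUP \<theta>\<in>{\<theta>::real. \<bar>\<theta>\<bar> = 1}. onorm (\<lambda>x. x + \<theta> *\<^sub>R T x)) = 1 + onorm T)"

definition aconv_R :: "'a::real_normed_vector set \<Rightarrow> 'a set" where
  "aconv_R S = convex hull {a *\<^sub>R s | a s. \<bar>a\<bar> \<le> 1 \<and> s \<in> S}"

definition lush_R :: "'a::real_normed_vector itself \<Rightarrow> bool" where
  "lush_R _ \<longleftrightarrow>
     (\<forall>x y :: 'a. norm x = 1 \<and> norm y = 1 \<longrightarrow>
        (\<forall>\<epsilon>>0. \<exists>f\<in>dualR. onorm f = 1 \<and>
            x \<in> slice (cball 0 1) f \<epsilon> \<and>
            infdist y (aconv_R (slice (cball 0 1) f \<epsilon>)) < \<epsilon>))"

definition dualC :: "('a::cbanach \<Rightarrow> complex) set" where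
  "dualC = {f. bounded_linear f \<and> (\<forall>c x. f (scaleC c x) = c * f x)}"

definition SCD_set_C :: "'a::cbanach set \<Rightarrow> bool" where
  "SCD_set_C A \<longleftrightarrow>
     (\<exists>(f :: nat \<Rightarrow> 'a \<Rightarrow> complex) (\<epsilon> :: nat \<Rightarrow> real).
        (\<forall>n. f n \<in> dualC \<and> \<epsilon> n > 0) \<and>
        (\<forall>B. B \<subseteq> A \<longrightarrow> (\<forall>n. B \<inter> slice A (\<lambda>x. Re (f n x)) (\<epsilon> n) \<noteq> {})
              \<longrightarrow> A \<subseteq> closure (convex hull B)))"

definition alt_daugavet_C :: "'a::cbanach itself \<Rightarrow> bool" where
  "alt_daugavet_C _ \<longleftrightarrow>
     (\<forall>T :: 'a \<Rightarrow> 'a. bounded_linear T \<and> (\<forall>c x. T (scaleC c x) = scaleC c (T x)) \<and>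
        vector_space.dim (scaleC :: complex \<Rightarrow> 'a \<Rightarrow> 'a) (range T) = 1 \<longrightarrow>
        (SUP \<theta>\<in>{\<theta>::complex. cmod \<theta> = 1}. onorm (\<lambda>x. x + scaleC \<theta> (T x))) = 1 + onorm T)"

definition aconv_C :: "'a::cbanach set \<Rightarrow> 'a set" where
  "aconv_C S = convex hull {scaleC a s | a s. cmod a \<le> 1 \<and> s \<in> S}"

definition lush_C :: "'a::cbanach itself \<Rightarrow> bool" where
  "lush_C _ \<longleftrightarrow>
     (\<forall>x y :: 'a. norm x = 1 \<and> norm y = 1 \<longrightarrow>
        (\<forall>\<epsilon>>0. \<exists>f\<in>dualC. onorm f = 1 \<and>
            x \<in> slice (cball 0 1) (\<lambda>z. Re (f z)) \<epsilon> \<and>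
            infdist y (aconv_C (slice (cball 0 1) (\<lambda>z. Re (f z)) \<epsilon>)) < \<epsilon>))"

end

theory Submission
  imports Defs
begin


definition sublin :: "('a::real_vector \<Rightarrow> real) \<Rightarrow> bool" where
  "sublin p \<longleftrightarrow> (\<forall>x y. p (x + y) \<le> p x + p y) \<and> (\<forall>c x. c \<ge> 0 \<longrightarrow> p (c *\<^sub>R x) = c * p x)"

lemma sublin_0: "sublin p \<Longrightarrow> p 0 = 0"
  unfolding sublin_def by (metis mult_zero_left order_refl scale_zero_left)

lemma sublin_add: "sublin p \<Longrightarrow> p (x + y) \<le> p x + p y"
  unfolding sublin_def by blast

lemma sublin_hom: "sublin p \<Longrightarrow> c \<ge> 0 \<Longrightarrow> p (c *\<^sub>R x) = c * p x"
  unfolding sublin_def by blast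

lemma sublin_neg: "sublin p \<Longrightarrow> - p (- x) \<le> p x"
  using sublin_add[of p x "-x"] sublin_0[of p] by simp

lemma sublin_norm: "sublin norm"
  unfolding sublin_def by (simp add: norm_triangle_ineq)

definition tr :: "('a::real_vector \<Rightarrow> real) \<Rightarrow> 'a \<Rightarrow> 'a \<Rightarrow> real" where
  "tr q y x = Inf ((\<lambda>t. q (x + t *\<^sub>R y) - t * q y) ` {0..})"

lemma tr_lb:
  assumes q: "sublin q" and t: "t \<ge> 0"
  shows "- q (- x) \<le> q (x + t *\<^sub>R y) - t * q y"
proof -
  have "q (t *\<^sub>R y) \<le> q (x + t *\<^sub>R y) + q (- x)"
    using sublin_add[OF q, of "x + t *\<^sub>R y" "-x"] by simp
  then show ?thesis using sublin_hom[OF q t] by simp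
qed

lemma tr_bdd: "sublin q \<Longrightarrow> bdd_below ((\<lambda>t. q (x + t *\<^sub>R y) - t * q y) ` {0..})"
  by (rule bdd_belowI[where m = "- q (- x)"]) (auto intro: tr_lb)

lemma tr_le: "sublin q \<Longrightarrow> t \<ge> 0 \<Longrightarrow> tr q y x \<le> q (x + t *\<^sub>R y) - t * q y"
  unfolding tr_def by (rule cInf_lower) (auto intro: tr_bdd)

lemma tr_ge: "sublin q \<Longrightarrow> - q (- x) \<le> tr q y x"
  unfolding tr_def by (rule cInf_greatest) (auto intro: tr_lb)

lemma tr_greatest: "(\<And>t. t \<ge> 0 \<Longrightarrow> m \<le> q (x + t *\<^sub>R y) - t * q y) \<Longrightarrow> m \<le> tr q y x"
  unfolding tr_def by (rule cInf_greatest) auto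

lemma tr_below: "sublin q \<Longrightarrow> tr q y x \<le> q x"
  using tr_le[of q 0 y x] by simp

lemma tr_sublin:
  assumes q: "sublin q"
  shows "sublin (tr q y)"
  unfolding sublin_def
proof (intro conjI allI impI)
  fix x x'
  show "tr q y (x + x') \<le> tr q y x + tr q y x'"
  proof -
    have "tr q y (x + x') - tr q y x' \<le> q (x + t *\<^sub>R y) - t * q y" if t: "t \<ge> 0" for t
    proof -
      have "tr q y (x + x') - (q (x + t *\<^sub>R y) - t * q y) \<le> q (x' + s *\<^sub>R y) - s * q y"
        if s: "s \<ge> 0" for s
      proof -
        have "tr q y (x + x') \<le> q ((x + x') + (t + s) *\<^sub>R y) - (t + s) * q y"
          using tr_le[OF q, of "t + s"] t s by simp
        also have "q ((x + x') + (t + s) *\<^sub>R y) \<le> q (x + t *\<^sub>R y) + q (x' + s *\<^sub>R y)"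
          using sublin_add[OF q, of "x + t *\<^sub>R y" "x' + s *\<^sub>R y"]
          by (simp add: algebra_simps scaleR_add_left)
        finally show ?thesis by (simp add: algebra_simps)
      qed
      then have "tr q y (x + x') - (q (x + t *\<^sub>R y) - t * q y) \<le> tr q y x'"
        by (rule tr_greatest)
      then show ?thesis by simp
    qed
    then have "tr q y (x + x') - tr q y x' \<le> tr q y x" by (rule tr_greatest)
    then show ?thesis by simp
  qed
next
  fix c :: real and x assume c: "c \<ge> 0"
  show "tr q y (c *\<^sub>R x) = c * tr q y x"
  proof (cases "c = 0")
    case True
    have "tr q y 0 = 0"
    proof (rule antisym)
      show "tr q y 0 \<le> 0" using tr_le[OF q, of 0 y 0] sublin_0[OF q] by simp
      show "0 \<le> tr q y 0" by (rule tr_greatest) (simp add: sublin_hom[OF q])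
    qed
    then show ?thesis using True by simp
  next
    case False
    then have cp: "c > 0" using c by simp
    show ?thesis
    proof (rule antisym)
      have "tr q y (c *\<^sub>R x) / c \<le> q (x + t *\<^sub>R y) - t * q y" if t: "t \<ge> 0" for t
      proof -
        have "tr q y (c *\<^sub>R x) \<le> q (c *\<^sub>R x + (c * t) *\<^sub>R y) - (c * t) * q y"
          using tr_le[OF q, of "c * t"] t c by simp
        also have "q (c *\<^sub>R x + (c * t) *\<^sub>R y) = c * q (x + t *\<^sub>R y)"
          using sublin_hom[OF q c, of "x + t *\<^sub>R y"] by (simp add: scaleR_add_right)
        finally have "tr q y (c *\<^sub>R x) \<le> (q (x + t *\<^sub>R y) - t * q y) * c"
          by (simp add: algebra_simps)
        then show ?thesis using cp by (simp add: pos_divide_le_eq)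
      qed
      then have "tr q y (c *\<^sub>R x) / c \<le> tr q y x" by (rule tr_greatest)
      then show "tr q y (c *\<^sub>R x) \<le> c * tr q y x" using cp by (simp add: divide_le_eq mult.commute)
    next
      have "c * tr q y x \<le> q (c *\<^sub>R x + t *\<^sub>R y) - t * q y" if t: "t \<ge> 0" for t
      proof -
        have "tr q y x \<le> q (x + (t / c) *\<^sub>R y) - (t / c) * q y"
          using tr_le[OF q, of "t / c"] t cp by simp
        then have "c * tr q y x \<le> c * (q (x + (t / c) *\<^sub>R y) - (t / c) * q y)"
          using cp by (intro mult_left_mono) auto
        then have "c * tr q y x \<le> c * q (x + (t / c) *\<^sub>R y) - t * q y"
          using cp by (simp add: algebra_simps)
        also have "c * q (x + (t / c) *\<^sub>R y) = q (c *\<^sub>R x + t *\<^sub>R y)"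
          using sublin_hom[OF q c, of "x + (t / c) *\<^sub>R y"] cp by (simp add: scaleR_add_right)
        finally show ?thesis .
      qed
      then show "c * tr q y x \<le> tr q y (c *\<^sub>R x)" by (rule tr_greatest)
    qed
  qed
qed

lemma minimal_sublin:
  fixes p :: "'a::real_vector \<Rightarrow> real"
  assumes p: "sublin p"
  shows "\<exists>q. sublin q \<and> (\<forall>x. q x \<le> p x) \<and>
           (\<forall>r. sublin r \<and> (\<forall>x. r x \<le> q x) \<longrightarrow> r = q)"
proof -
  define A where "A = {r. sublin r \<and> (\<forall>x. r x \<le> p x)}"
  define P where "P = (\<lambda>(r::'a \<Rightarrow> real) s. \<forall>x. s x \<le> r x)"
  have po: "partial_order_on A (relation_of P A)"
    unfolding partial_order_on_def preorder_on_def refl_on_def trans_on_def antisym_on_def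
      relation_of_def P_def
    by (auto intro: order_trans) (meson antisym ext)
  have ch: "\<exists>u\<in>A. \<forall>a\<in>C. P a u" if C: "C \<in> Chains (relation_of P A)" for C
  proof -
    have CA: "C \<subseteq> A" using C unfolding Chains_def relation_of_def by auto
    have cmp: "P a b \<or> P b a" if "a \<in> C" "b \<in> C" for a b
      using C that unfolding Chains_def relation_of_def by auto
    define D where "D = insert p C"
    have DA: "\<And>r. r \<in> D \<Longrightarrow> sublin r \<and> (\<forall>x. r x \<le> p x)"
      using CA p unfolding D_def A_def by auto
    have low: "\<exists>r\<in>D. P r1 r \<and> P r2 r" if "r1 \<in> D" "r2 \<in> D" for r1 r2
    proof -
      have pp: "P p r" if "r \<in> D" for r using DA[OF that] unfolding P_def by simp
      have pr: "P r r" for r unfolding P_def by simp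
      show ?thesis
      proof (cases "r1 = p")
        case True then show ?thesis using that pp pr by blast
      next
        case False
        show ?thesis
        proof (cases "r2 = p")
          case True then show ?thesis using that pp pr by blast
        next
          case F2: False
          then have "r1 \<in> C" "r2 \<in> C" using that False unfolding D_def by auto
          then have "P r1 r2 \<or> P r2 r1" using cmp by blast
          then show ?thesis using that pr by blast
        qed
      qed
    qed
    define u where "u = (\<lambda>x. Inf ((\<lambda>r. r x) ` D))"
    have bdd: "bdd_below ((\<lambda>r. r x) ` D)" for x
      by (rule bdd_belowI[where m = "- p (- x)"])
         (use DA in \<open>auto intro: order_trans[OF _ sublin_neg]\<close>)
    have ule: "u x \<le> r x" if "r \<in> D" for r x
      unfolding u_def using that bdd by (auto intro: cInf_lower)
    have uge: "m \<le> u x" if "\<And>r. r \<in> D \<Longrightarrow> m \<le> r x" for m x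
      unfolding u_def using that by (auto simp: D_def intro: cInf_greatest)
    have "sublin u"
      unfolding sublin_def
    proof (intro conjI allI impI)
      fix x y
      have H: "u (x + y) - r2 y \<le> r1 x" if rr: "r1 \<in> D" "r2 \<in> D" for r1 r2
      proof -
        obtain r where r: "r \<in> D" "P r1 r" "P r2 r" using low[OF rr] by blast
        have "u (x + y) \<le> r (x + y)" using ule r by blast
        also have "\<dots> \<le> r x + r y" using DA[OF r(1)] sublin_add by blast
        also have "\<dots> \<le> r1 x + r2 y" using r unfolding P_def by (meson add_mono)
        finally show ?thesis by simp
      qed
      have H2: "u (x + y) - r2 y \<le> u x" if r2: "r2 \<in> D" for r2
        by (rule uge) (rule H[OF _ r2])
      have "u (x + y) - u x \<le> r2 y" if r2: "r2 \<in> D" for r2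
        using H2[OF r2] by linarith
      then have "u (x + y) - u x \<le> u y"
        by (rule uge)
      then show "u (x + y) \<le> u x + u y" by simp
    next
      fix c :: real and x assume c: "c \<ge> 0"
      show "u (c *\<^sub>R x) = c * u x"
      proof (cases "c = 0")
        case True
        have z: "r (c *\<^sub>R x) = 0" if r: "r \<in> D" for r
          using True sublin_0[of r] DA[OF r] by simp
        have pD: "p \<in> D" unfolding D_def by simp
        have "u (c *\<^sub>R x) \<le> 0" using ule[OF pD, of "c *\<^sub>R x"] z[OF pD] by simp
        moreover have "0 \<le> u (c *\<^sub>R x)" by (rule uge) (simp add: z)
        ultimately have "u (c *\<^sub>R x) = 0" by simp
        then show ?thesis using True by simp
      next
        case False
        then have cp: "c > 0" using c by simp
        have hom: "r (c *\<^sub>R x) = c * r x" if "r \<in> D" for r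
          using DA[OF that] sublin_hom c by blast
        show ?thesis
        proof (rule antisym)
          have "u (c *\<^sub>R x) / c \<le> r x" if rD: "r \<in> D" for r
          proof -
            have "u (c *\<^sub>R x) \<le> r x * c" using ule[OF rD, of "c *\<^sub>R x"] hom[OF rD] by (simp add: mult.commute)
            then show ?thesis using cp by (simp add: pos_divide_le_eq)
          qed
          then have "u (c *\<^sub>R x) / c \<le> u x" by (rule uge)
          then have "u (c *\<^sub>R x) \<le> u x * c" using cp by (simp add: pos_divide_le_eq)
          then show "u (c *\<^sub>R x) \<le> c * u x" by (simp add: mult.commute)
        next
          have "c * u x \<le> r (c *\<^sub>R x)" if rD: "r \<in> D" for r
          proof -
            have "c * u x \<le> c * r x" using ule[OF rD, of x] cp by (intro mult_left_mono) auto
            then show ?thesis using hom[OF rD] by simp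
          qed
          then show "c * u x \<le> u (c *\<^sub>R x)" by (rule uge)
        qed
      qed
    qed
    moreover have "\<forall>x. u x \<le> p x" using ule D_def by auto
    ultimately have "u \<in> A" unfolding A_def by blast
    moreover have "\<forall>a\<in>C. P a u" using ule unfolding P_def D_def by auto
    ultimately show ?thesis by blast
  qed
  obtain q where q: "q \<in> A" "\<forall>a\<in>A. P q a \<longrightarrow> a = q"
    using predicate_Zorn[OF po ch] by blast
  show ?thesis
  proof (intro exI conjI allI impI)
    show "sublin q" "\<And>x. q x \<le> p x" using q(1) unfolding A_def by auto
    fix r assume r: "sublin r \<and> (\<forall>x. r x \<le> q x)"
    then have "r \<in> A" using q(1) unfolding A_def by (auto intro: order_trans)
    then show "r = q" using q(2) r unfolding P_def by blast
  qed
qed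

lemma minimal_sublin_odd:
  assumes q: "sublin q" and m: "\<forall>r. sublin r \<and> (\<forall>x. r x \<le> q x) \<longrightarrow> r = q"
  shows "q (- y) = - q y"
proof -
  have "tr q y = q" using m tr_sublin[OF q] tr_below[OF q] by blast
  then have "q (- y) \<le> q (- y + 1 *\<^sub>R y) - 1 * q y" using tr_le[OF q, of 1 y "- y"] by simp
  then have "q (- y) \<le> - q y" using sublin_0[OF q] by simp
  moreover have "- q y \<le> q (- y)" using sublin_neg[OF q, of y] by simp
  ultimately show ?thesis by simp
qed

lemma hahn_banach_norming:
  fixes v :: "'a::real_normed_vector"
  shows "\<exists>h. bounded_linear h \<and> (\<forall>x. \<bar>h x\<bar> \<le> norm x) \<and> h v = norm v"
proof -
  have p0: "sublin (tr norm v)" by (rule tr_sublin[OF sublin_norm])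
  obtain q where q: "sublin q" "\<forall>x. q x \<le> tr norm v x"
    and m: "\<forall>r. sublin r \<and> (\<forall>x. r x \<le> q x) \<longrightarrow> r = q"
    using minimal_sublin[OF p0] by blast
  have odd: "\<And>y. q (- y) = - q y" using minimal_sublin_odd[OF q(1) m] by blast
  have qn: "q x \<le> norm x" for x using q(2) tr_below[OF sublin_norm, of v x] by (meson order_trans)
  have add: "q (x + y) = q x + q y" for x y
  proof (rule antisym)
    show "q (x + y) \<le> q x + q y" by (rule sublin_add[OF q(1)])
    have "q (- x + - y) \<le> q (- x) + q (- y)" by (rule sublin_add[OF q(1)])
    then show "q x + q y \<le> q (x + y)" using odd[of "x + y"] odd[of x] odd[of y] by (simp add: add.commute)
  qed
  have scl: "q (c *\<^sub>R x) = c * q x" for c x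
  proof (cases "c \<ge> 0")
    case True then show ?thesis using sublin_hom[OF q(1)] by blast
  next
    case False
    then have "q ((- c) *\<^sub>R x) = (- c) * q x" using sublin_hom[OF q(1), of "- c"] by simp
    then show ?thesis using odd[of "c *\<^sub>R x"] by simp
  qed
  have ab: "\<bar>q x\<bar> \<le> norm x" for x using qn[of x] qn[of "- x"] odd[of x] by simp
  have "bounded_linear q"
    by (rule bounded_linear_intro[where K = 1]) (use add scl ab in \<open>auto simp: abs_le_iff\<close>)
  moreover have "q v = norm v"
  proof -
    have "q (- v) \<le> tr norm v (- v)" using q(2) by blast
    also have "\<dots> \<le> norm (- v + 1 *\<^sub>R v) - 1 * norm v" by (rule tr_le[OF sublin_norm]) simp
    finally have "norm v \<le> q v" using odd[of v] by simp
    then show ?thesis using qn[of v] by simp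
  qed
  ultimately show ?thesis using ab by blast
qed



lemma core:
  fixes x0 :: "'a::banach" and G :: "'f \<Rightarrow> 'a \<Rightarrow> real"
    and S :: "nat \<Rightarrow> 'a set" and R :: "'a \<Rightarrow> 'a \<Rightarrow> bool"
  assumes HB: "\<And>v. v \<noteq> 0 \<Longrightarrow> \<exists>h. Q h \<and> bounded_linear (G h) \<and> (\<forall>x. \<bar>G h x\<bar> \<le> norm x) \<and> G h v = norm v"
    and ADP: "\<And>y n \<eta>. norm y = 1 \<Longrightarrow> \<eta> > 0 \<Longrightarrow>
               \<exists>z w. z \<in> S n \<and> norm w \<le> 1 \<and> R z w \<and> norm (y + w) > 2 - \<eta>"
    and x0: "norm x0 = 1" and e: "0 < \<epsilon>" "\<epsilon> \<le> 1"
  shows "\<exists>h. Q h \<and> bounded_linear (G h) \<and> (\<forall>x. \<bar>G h x\<bar> \<le> norm x) \<and>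
             (\<exists>u. norm u = 1 \<and> G h u = 1) \<and> G h x0 > 1 - \<epsilon> \<and>
             (\<forall>n. \<exists>z w. z \<in> S n \<and> R z w \<and> norm w \<le> 1 \<and> G h w > 1 - \<epsilon>)"
proof -
  define a :: "nat \<Rightarrow> real" where "a n = (1/2) ^ Suc n" for n
  define \<delta> :: "nat \<Rightarrow> real" where "\<delta> n = \<epsilon> / 8 * (1/4) ^ n" for n
  have \<delta>pos: "\<delta> n > 0" for n using e unfolding \<delta>_def by simp
  have "\<forall>n y. \<exists>p. norm y = 1 \<longrightarrow> fst p \<in> S n \<and> norm (snd p) \<le> 1 \<and> R (fst p) (snd p) \<and>
                 norm (y + snd p) > 2 - \<delta> n"
    using ADP \<delta>pos by fastforce
  then obtain C where C: "\<And>n y. norm y = 1 \<Longrightarrow> fst (C n y) \<in> S n \<and> norm (snd (C n y)) \<le> 1 \<and>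
        R (fst (C n y)) (snd (C n y)) \<and> norm (y + snd (C n y)) > 2 - \<delta> n"
    by metis
  define V where "V = rec_nat x0 (\<lambda>n vn. vn + a n *\<^sub>R snd (C n (vn /\<^sub>R norm vn)))"
  define W where "W n = snd (C n (V n /\<^sub>R norm (V n)))" for n
  define Z where "Z n = fst (C n (V n /\<^sub>R norm (V n)))" for n
  have V0: "V 0 = x0" unfolding V_def by simp
  have VS: "V (Suc n) = V n + a n *\<^sub>R W n" for n unfolding V_def W_def by simp
  have a_le: "a n \<le> 1" for n unfolding a_def by (simp add: power_le_one order_trans[OF power_le_one])
  have a_pos: "a n > 0" for n unfolding a_def by simp
  have d_le: "2 * \<delta> n \<le> a n" for n
  proof -
    have "(1/4::real) ^ n \<le> (1/2) ^ n" by (rule power_mono) auto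
    moreover have "\<epsilon> * (1/4::real) ^ n \<le> 1 * (1/4) ^ n" using e by (intro mult_right_mono) auto
    ultimately have "\<epsilon> * (1/4::real) ^ n \<le> (1/2) ^ n * 2" 
      using zero_le_power[of "1/2::real" n] by linarith
    then show ?thesis unfolding a_def \<delta>_def by simp
  qed
  have step: "norm (V (Suc n)) \<ge> norm (V n) + a n - \<delta> n * norm (V n) \<and>
              Z n \<in> S n \<and> norm (W n) \<le> 1 \<and> R (Z n) (W n)"
    if N1: "norm (V n) \<ge> 1" for n
  proof -
    define N where "N = norm (V n)"
    define y where "y = V n /\<^sub>R N"
    have Np: "N > 0" using N1 N_def by linarith
    have ny: "norm y = 1" using Np unfolding y_def N_def by simp
    note Cy = C[OF ny, of n]
    have Wy: "W n = snd (C n y)" "Z n = fst (C n y)" unfolding W_def Z_def y_def N_def by simp_all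
    have w1: "norm (W n) \<le> 1" using Cy Wy by simp
    have Vy: "V n = N *\<^sub>R y" using Np unfolding y_def by simp
    have "N * (2 - \<delta> n) \<le> N * norm (y + W n)"
      using Cy Wy Np by (intro mult_left_mono) auto
    also have "\<dots> = norm (N *\<^sub>R y + N *\<^sub>R W n)" using Np by (simp add: scaleR_add_right[symmetric])
    also have "\<dots> \<le> norm (N *\<^sub>R y + a n *\<^sub>R W n) + norm ((N - a n) *\<^sub>R W n)"
      by (rule order_trans[OF _ norm_triangle_ineq]) (simp add: algebra_simps)
    also have "norm ((N - a n) *\<^sub>R W n) \<le> N - a n"
    proof -
      have "N - a n \<ge> 0" using a_le[of n] N1 N_def by simp
      then show ?thesis using w1 by (simp add: mult_left_le)
    qed
    finally have "N * (2 - \<delta> n) - (N - a n) \<le> norm (V (Suc n))"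
      using VS Vy by simp
    then show ?thesis using Cy Wy unfolding N_def by (simp add: algebra_simps)
  qed
  have bounds: "1 \<le> norm (V n) \<and> norm (V n) \<le> 2 - (1/2) ^ n" for n
  proof (induction n)
    case 0 then show ?case using x0 V0 by simp
  next
    case (Suc n)
    from step[of n] Suc have st: "norm (V (Suc n)) \<ge> norm (V n) + a n - \<delta> n * norm (V n)"
      and w1: "norm (W n) \<le> 1" by auto
    have "\<delta> n * norm (V n) \<le> \<delta> n * 2"
      using Suc \<delta>pos[of n] by (intro mult_left_mono) (auto simp: less_imp_le order_trans)
    then have lo: "norm (V (Suc n)) \<ge> norm (V n)" using st d_le[of n] by simp
    have "norm (V (Suc n)) \<le> norm (V n) + a n"
      using VS[of n] norm_triangle_ineq[of "V n" "a n *\<^sub>R W n"] w1 a_pos[of n]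
      by (simp add: mult_left_le order_trans)
    then have "norm (V (Suc n)) \<le> 2 - (1/2) ^ Suc n" using Suc unfolding a_def by simp
    then show ?case using lo Suc by simp
  qed
  have VZ: "Z n \<in> S n" "norm (W n) \<le> 1" "R (Z n) (W n)" for n using step[of n] bounds[of n] by auto
  have inc: "norm (V (Suc n)) \<ge> norm (V n) + a n - 2 * \<delta> n" for n
  proof -
    have "\<delta> n * norm (V n) \<le> \<delta> n * 2"
      using bounds[of n] \<delta>pos[of n] by (intro mult_left_mono) (auto simp: order_trans)
    then show ?thesis using step[of n] bounds[of n] by simp
  qed
  define f where "f j = a j *\<^sub>R W j" for j
  have fb: "norm (f j) \<le> (1/2) ^ Suc j" for j
    unfolding f_def using VZ(2)[of j] a_pos[of j] by (simp add: a_def mult_left_le)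
  have sf: "summable f"
    by (rule summable_comparison_test[OF _ summable_geometric[of "1/2::real", THEN summable_mult[of _ "1/2"]]])
       (use fb in \<open>auto simp: field_simps\<close>)
  have Vsum: "V n = x0 + (\<Sum>j<n. f j)" for n
    by (induction n) (auto simp: V0 VS f_def)
  define v where "v = x0 + suminf f"
  have Vlim: "V \<longlonglongrightarrow> v"
    unfolding Vsum v_def by (intro tendsto_add tendsto_const summable_LIMSEQ sf)
  have nv: "norm v \<ge> 1"
    using tendsto_norm[OF Vlim] bounds by (intro tendsto_le[OF _ _ tendsto_const]) auto
  then have "v \<noteq> 0" by auto
  from HB[OF this] obtain h where h: "Q h" "bounded_linear (G h)" "\<And>x. \<bar>G h x\<bar> \<le> norm x"
    "G h v = norm v" by blast
  define g where "g = G h"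
  interpret g: bounded_linear g using h(2) g_def by simp
  have gle: "g x \<le> norm x" for x using h(3)[of x] g_def by simp
  define E where "E m = norm (V m) - g (V m)" for m
  define K where "K m = \<epsilon> / 3 * (1/4) ^ m" for m
  have E0: "E m \<ge> 0" for m unfolding E_def using gle by simp
  have gW: "g (W n) \<le> 1" for n using gle[of "W n"] VZ(2)[of n] by simp
  have Einc: "incseq (\<lambda>m. E m - K m)"
  proof (rule incseq_SucI)
    fix m
    have "E (Suc m) - E m = norm (V (Suc m)) - norm (V m) - a m * g (W m)"
      unfolding E_def VS by (simp add: g.add g.scale)
    also have "\<dots> \<ge> a m - 2 * \<delta> m - a m"
    proof -
      have "a m * g (W m) \<le> a m * 1" using gW[of m] a_pos[of m] by (intro mult_left_mono) auto
      then show ?thesis using inc[of m] by linarith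
    qed
    finally have "E (Suc m) - E m \<ge> - 2 * \<delta> m" by simp
    moreover have "K m - K (Suc m) = 2 * \<delta> m" unfolding K_def \<delta>_def by simp
    ultimately show "E m - K m \<le> E (Suc m) - K (Suc m)" by simp
  qed
  have Elim: "(\<lambda>m. E m - K m) \<longlonglongrightarrow> 0"
  proof -
    have "(\<lambda>m. E m) \<longlonglongrightarrow> norm v - g v"
      unfolding E_def by (intro tendsto_diff tendsto_norm Vlim g.tendsto)
    moreover have "norm v - g v = 0" using h(4) g_def by simp
    moreover have "K \<longlonglongrightarrow> 0" unfolding K_def
      by (intro tendsto_mult_right_zero LIMSEQ_power_zero) auto
    ultimately show ?thesis using tendsto_diff by fastforce
  qed
  have EK: "E m \<le> K m" for m using incseq_le[OF Einc Elim, of m] by simp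
  show ?thesis
  proof (rule exI[of _ h], intro conjI allI)
    show "Q h" "bounded_linear (G h)" "\<And>x. \<bar>G h x\<bar> \<le> norm x" using h by auto
    show "\<exists>u. norm u = 1 \<and> G h u = 1"
      using \<open>v \<noteq> 0\<close> h(4) g.scale[of "inverse (norm v)" v] g_def
      by (intro exI[of _ "v /\<^sub>R norm v"]) simp
    show "G h x0 > 1 - \<epsilon>"
      using EK[of 0] e x0 V0 unfolding E_def K_def g_def by simp
    fix n
    have "a n * g (W n) = g (V (Suc n)) - g (V n)" unfolding VS by (simp add: g.add g.scale)
    also have "\<dots> = norm (V (Suc n)) - E (Suc n) - (norm (V n) - E n)" unfolding E_def by simp
    also have "\<dots> \<ge> a n - 2 * \<delta> n - K (Suc n)" using inc[of n] EK[of "Suc n"] E0[of n] by simp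
    finally have "a n * g (W n) \<ge> a n - \<epsilon> / 3 * (1/4) ^ n" unfolding K_def \<delta>_def by simp
    moreover have "\<epsilon> / 3 * (1/4) ^ n < a n * \<epsilon>"
    proof -
      have "(1/4::real) ^ n \<le> (1/2) ^ n" by (rule power_mono) auto
      moreover have "(0::real) < (1/2) ^ n" by simp
      ultimately have "(1/4::real) ^ n * 2 < (1/2) ^ n * 3" by linarith
      then show ?thesis using e unfolding a_def by simp
    qed
    ultimately have "a n * (1 - \<epsilon>) < a n * g (W n)" by (simp add: algebra_simps)
    then have "1 - \<epsilon> < g (W n)" using a_pos[of n] by simp
    then show "\<exists>z w. z \<in> S n \<and> R z w \<and> norm w \<le> 1 \<and> G h w > 1 - \<epsilon>"
      using VZ[of n] g_def by blast
  qed
qed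


lemma slice_zero_fun:
  assumes "\<forall>x. g x = 0" "e > 0" "A \<noteq> {}"
  shows "slice A g e = A"
proof -
  have "g ` A = {0}" using assms by auto
  then show ?thesis using assms unfolding slice_def by auto
qed

lemma Sup_le_slice:
  fixes g :: "'a::real_normed_vector \<Rightarrow> real"
  assumes "\<And>x. norm x \<le> 1 \<Longrightarrow> g x \<le> N" "norm z \<le> 1" "g z > N - e"
  shows "z \<in> slice (cball 0 1) g e"
proof -
  have "Sup (g ` cball 0 1) \<le> N"
    by (rule cSup_least) (use assms(1) in \<open>auto simp: dist_norm\<close>)
  then show ?thesis using assms unfolding slice_def by (auto simp: dist_norm)
qed

lemma adp_R:
  fixes g :: "'a::real_normed_vector \<Rightarrow> real"
  assumes adp: "alt_daugavet_R TYPE('a)" and g: "bounded_linear g" and e: "e > 0"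
    and y: "norm y = 1" and \<eta>: "\<eta> > 0"
  shows "\<exists>z w. z \<in> slice (cball 0 1) g e \<and> norm w \<le> 1 \<and> (w = z \<or> w = - z) \<and> norm (y + w) > 2 - \<eta>"
proof (cases "\<forall>x. g x = 0")
  case True
  have "y \<in> slice (cball 0 1) g e" using slice_zero_fun[OF True e, of "cball 0 1"] y by auto
  then show ?thesis using y
    by (intro exI[of _ y] exI[of _ y]) (auto simp: scaleR_2[symmetric] \<eta>)
next
  case False
  interpret g: bounded_linear g by fact
  define N where "N = onorm g"
  have Npos: "N > 0" using False onorm_eq_0[OF g] onorm_pos_le[OF g] N_def by auto
  have gN: "\<bar>g x\<bar> \<le> N * norm x" for x using onorm[OF g, of x] N_def by simp
  obtain x1 where x1: "g x1 \<noteq> 0" using False by blast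
  define k where "k x = g x / N" for x
  define T where "T x = k x *\<^sub>R y" for x
  have kN: "\<bar>k x\<bar> \<le> norm x" for x using gN[of x] Npos unfolding k_def by (simp add: divide_le_eq abs_div mult.commute)
  have blT: "bounded_linear T"
    unfolding T_def k_def
    by (rule bounded_linear_compose[OF bounded_linear_scaleR_left
          bounded_linear_compose[OF bounded_linear_divide g]])
  have rT: "range T = span {y}"
  proof
    show "range T \<subseteq> span {y}" unfolding T_def real_vector.span_singleton by auto
    show "span {y} \<subseteq> range T"
    proof
      fix w assume "w \<in> span {y}"
      then obtain c where c: "w = c *\<^sub>R y" unfolding real_vector.span_singleton by auto
      have "T ((c / k x1) *\<^sub>R x1) = w"
        using x1 Npos unfolding T_def c k_def by (simp add: g.scale)
      then show "w \<in> range T" by (metis rangeI)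
    qed
  qed
  have y0: "y \<noteq> 0" using y by auto
  have "dim {y} = 1"
    using real_vector.dim_span_eq_card_independent[of "{y}"] real_vector.independent_insert y0 by simp
  then have dimT: "dim (range T) = 1" unfolding rT real_vector.dim_span .
  have onT: "onorm T = 1"
  proof -
    have "onorm T = onorm k" unfolding onorm_def T_def using y by simp
    also have "k = (\<lambda>x. (1 / N) *\<^sub>R g x)" unfolding k_def by auto
    also have "onorm \<dots> = 1" using onorm_scaleR[OF g, of "1/N"] Npos N_def by simp
    finally show ?thesis .
  qed
  define \<eta>' where "\<eta>' = min (\<eta> / 2) (min 1 (e / N))"
  have \<eta>'p: "\<eta>' > 0" using \<eta> e Npos unfolding \<eta>'_def by simp
  have sup2: "(SUP \<theta>\<in>{\<theta>::real. \<bar>\<theta>\<bar> = 1}. onorm (\<lambda>x. x + \<theta> *\<^sub>R T x)) = 2"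
    using adp blT dimT onT unfolding alt_daugavet_R_def by simp
  obtain \<theta> where \<theta>: "\<bar>\<theta>\<bar> = 1" "onorm (\<lambda>x. x + \<theta> *\<^sub>R T x) > 2 - \<eta>'"
  proof (rule ccontr)
    assume "\<not> thesis"
    with that have "\<forall>\<theta>. \<bar>\<theta>\<bar> = 1 \<longrightarrow> onorm (\<lambda>x. x + \<theta> *\<^sub>R T x) \<le> 2 - \<eta>'" by force
    then have "(SUP \<theta>\<in>{\<theta>::real. \<bar>\<theta>\<bar> = 1}. onorm (\<lambda>x. x + \<theta> *\<^sub>R T x)) \<le> 2 - \<eta>'"
      by (intro cSUP_least) (auto intro: exI[of _ 1])
    then show False using sup2 \<eta>'p by simp
  qed
  define L where "L x = x + \<theta> *\<^sub>R T x" for x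
  interpret L: bounded_linear L
    unfolding L_def
    by (intro bounded_linear_add bounded_linear_ident
        bounded_linear_compose[OF bounded_linear_scaleR_right blT])
  obtain x where x: "norm (L x) > (2 - \<eta>') * norm x"
  proof (rule ccontr)
    assume "\<not> thesis"
    with that have "\<And>x. norm (L x) \<le> (2 - \<eta>') * norm x" by (meson not_less)
    then have "onorm L \<le> 2 - \<eta>'" using \<eta>'p unfolding \<eta>'_def by (intro onorm_bound) auto
    then show False using \<theta> unfolding L_def by simp
  qed
  have x0: "x \<noteq> 0" using x by auto
  define u where "u = x /\<^sub>R norm x"
  have nu: "norm u = 1" using x0 unfolding u_def by simp
  have Lu: "norm (L u) > 2 - \<eta>'"
  proof -
    have "norm (L u) = norm (L x) / norm x" unfolding u_def L.scale by (simp add: divide_inverse mult.commute)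
    then show ?thesis using x x0 by (simp add: less_divide_eq)
  qed
  define r where "r = \<bar>k u\<bar>"
  have r1: "r \<le> 1" using kN[of u] nu r_def by simp
  have "norm (L u) \<le> 1 + r"
    unfolding L_def T_def r_def using norm_triangle_ineq[of u "\<theta> *\<^sub>R k u *\<^sub>R y"] nu y \<theta>(1) by (simp add: abs_mult)
  then have r2: "r > 1 - \<eta>'" using Lu by simp
  then have rpos: "r > 0" using \<eta>'p unfolding \<eta>'_def by simp
  define \<sigma> where "\<sigma> = sgn (k u)"
  have \<sigma>: "\<bar>\<sigma>\<bar> = 1" "k u = \<sigma> * r" "\<sigma> * \<sigma> = 1"
    using rpos unfolding \<sigma>_def r_def by (auto simp: sgn_if)
  define z where "z = \<sigma> *\<^sub>R u"
  have nz: "norm z = 1" using nu \<sigma> unfolding z_def by simp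
  have "\<sigma> * k u = r" using \<sigma> by (metis mult.assoc mult_1)
  then have kz: "k z = r" unfolding z_def k_def by (simp add: g.scale)
  have zs: "z \<in> slice (cball 0 1) g e"
  proof (rule Sup_le_slice[where N = N])
    show "\<And>x. norm x \<le> 1 \<Longrightarrow> g x \<le> N" using gN
      by (smt (verit, best) Npos abs_le_iff mult_left_le)
    show "norm z \<le> 1" using nz by simp
    have 1: "g z = N * r" using kz Npos unfolding k_def by (simp add: field_simps)
    have 2: "N * r > N * (1 - \<eta>')" using r2 Npos by simp
    have 3: "N * (1 - \<eta>') \<ge> N - e"
    proof -
      have "\<eta>' \<le> e / N" unfolding \<eta>'_def by simp
      then have "N * \<eta>' \<le> e" using Npos by (simp add: le_divide_eq mult.commute)
      then show ?thesis by (simp add: algebra_simps)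
    qed
    show "g z > N - e" using 1 2 3 by linarith
  qed
  have Luz: "L u = \<sigma> *\<^sub>R (z + (\<theta> * r) *\<^sub>R y)"
    unfolding L_def T_def z_def using \<sigma> by (simp add: scaleR_add_right algebra_simps)
  have "norm (z + (\<theta> * r) *\<^sub>R y) > 2 - \<eta>'" using Lu \<sigma> unfolding Luz by simp
  moreover have "norm (z + \<theta> *\<^sub>R y) \<ge> norm (z + (\<theta> * r) *\<^sub>R y) - (1 - r)"
  proof -
    have "z + (\<theta> * r) *\<^sub>R y = (z + \<theta> *\<^sub>R y) - (\<theta> * (1 - r)) *\<^sub>R y" by (simp add: algebra_simps)
    then have "norm (z + (\<theta> * r) *\<^sub>R y) \<le> norm (z + \<theta> *\<^sub>R y) + norm ((\<theta> * (1 - r)) *\<^sub>R y)"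
      by (metis norm_triangle_ineq4)
    also have "norm ((\<theta> * (1 - r)) *\<^sub>R y) = 1 - r" using \<theta>(1) y r1 by (simp add: abs_mult)
    finally show ?thesis by simp
  qed
  ultimately have "norm (z + \<theta> *\<^sub>R y) > 2 - \<eta>" using r2 unfolding \<eta>'_def by simp
  moreover have "norm (y + \<theta> *\<^sub>R z) = norm (z + \<theta> *\<^sub>R y)"
  proof -
    have "y + \<theta> *\<^sub>R z = \<theta> *\<^sub>R (z + \<theta> *\<^sub>R y)" using \<theta>(1)
      by (auto simp: abs_if scaleR_add_right split: if_splits)
    then show ?thesis using \<theta>(1) by simp
  qed
  moreover have "\<theta> *\<^sub>R z = z \<or> \<theta> *\<^sub>R z = - z" using \<theta>(1) by (auto simp: abs_if split: if_splits)
  moreover have "norm (\<theta> *\<^sub>R z) \<le> 1" using \<theta>(1) nz by simp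
  ultimately show ?thesis using zs by (intro exI[of _ z] exI[of _ "\<theta> *\<^sub>R z"]) auto
qed


lemma slice_sup_one:
  fixes h :: "'a::real_normed_vector \<Rightarrow> real"
  assumes hb: "\<And>x. \<bar>h x\<bar> \<le> norm x" and u: "norm u = 1" "h u = 1"
  shows "Sup (h ` cball 0 1) = 1"
proof (rule cSup_eq_maximum)
  show "1 \<in> h ` cball 0 1" using u by (metis centre_in_cball dist_0_norm image_eqI mem_cball zero_less_one order_refl)
  fix t assume "t \<in> h ` cball 0 1"
  then obtain z where z: "norm z \<le> 1" "t = h z" by (auto simp: dist_norm)
  then show "t \<le> 1" using hb[of z] by linarith
qed

lemma closure_infdist_lt:
  assumes "y \<in> closure A" "e > 0"
  shows "infdist y A < e"
proof -
  have "A \<noteq> {}" using assms(1) by auto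
  then have "infdist y A = 0" using assms(1) in_closure_iff_infdist_zero by blast
  then show ?thesis using assms(2) by simp
qed

lemma thm_R:
  "alt_daugavet_R TYPE('a::banach) \<and> SCD_set_R (cball (0::'a) 1) \<longrightarrow> lush_R TYPE('a)"
proof (intro impI, elim conjE)
  assume adp: "alt_daugavet_R TYPE('a)" and scd: "SCD_set_R (cball (0::'a) 1)"
  obtain f :: "nat \<Rightarrow> 'a \<Rightarrow> real" and \<epsilon>n where fe: "\<forall>n. f n \<in> dualR \<and> \<epsilon>n n > 0"
    and cov: "\<forall>B. B \<subseteq> cball 0 1 \<longrightarrow> (\<forall>n. B \<inter> slice (cball 0 1) (f n) (\<epsilon>n n) \<noteq> {})
              \<longrightarrow> cball 0 1 \<subseteq> closure (convex hull B)"
    using scd unfolding SCD_set_R_def by blast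
  show "lush_R TYPE('a)"
    unfolding lush_R_def
  proof (intro allI impI)
    fix x y :: 'a and \<epsilon> :: real
    assume xy: "norm x = 1 \<and> norm y = 1" and e: "\<epsilon> > 0"
    define e' where "e' = min \<epsilon> 1"
    have e': "0 < e'" "e' \<le> 1" "e' \<le> \<epsilon>" using e unfolding e'_def by auto
    define S where "S n = slice (cball 0 1) (f n) (\<epsilon>n n)" for n
    have HB: "\<exists>h. True \<and> bounded_linear (id h) \<and> (\<forall>x. \<bar>id h x\<bar> \<le> norm x) \<and> id h v = norm v"
      if "v \<noteq> 0" for v :: 'a
      using hahn_banach_norming[of v] by simp
    have ADP: "\<exists>z w. z \<in> S n \<and> norm w \<le> 1 \<and> (w = z \<or> w = - z) \<and> norm (y' + w) > 2 - \<eta>"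
      if "norm y' = 1" "\<eta> > 0" for y' n \<eta>
      unfolding S_def using adp_R[OF adp _ _ that(1) that(2), of "f n" "\<epsilon>n n"] fe
      by (simp add: dualR_def)
    obtain h where h: "bounded_linear h" "\<And>x. \<bar>h x\<bar> \<le> norm x" "\<exists>u. norm u = 1 \<and> h u = 1"
      "h x > 1 - e'" and hn: "\<forall>n. \<exists>z w. z \<in> S n \<and> (w = z \<or> w = - z) \<and> norm w \<le> 1 \<and> h w > 1 - e'"
      using core[where Q = "\<lambda>_. True" and G = id and S = S and R = "\<lambda>z w. w = z \<or> w = - z",
          OF HB ADP _ e'(1) e'(2), of x] xy by auto
    obtain u where u: "norm u = 1" "h u = 1" using h(3) by blast
    have sup1: "Sup (h ` cball 0 1) = 1" by (rule slice_sup_one[OF h(2) u])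
    from hn obtain Z W where ZW: "\<And>n. Z n \<in> S n \<and> (W n = Z n \<or> W n = - Z n) \<and> norm (W n) \<le> 1 \<and> h (W n) > 1 - e'"
      by metis
    define Sl where "Sl = slice (cball 0 1) h \<epsilon>"
    have Wsl: "W n \<in> Sl" for n using ZW[of n] sup1 e' unfolding Sl_def slice_def by (auto simp: dist_norm)
    have ZB: "range Z \<subseteq> cball 0 1" using ZW unfolding S_def slice_def by auto
    have "range Z \<inter> slice (cball 0 1) (f n) (\<epsilon>n n) \<noteq> {}" for n
      using ZW[of n] unfolding S_def by blast
    then have "cball 0 1 \<subseteq> closure (convex hull (range Z))"
      using cov ZB by blast
    moreover have "range Z \<subseteq> {a *\<^sub>R s | a s. \<bar>a\<bar> \<le> 1 \<and> s \<in> Sl}"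
    proof clarify
      fix n
      have "Z n = 1 *\<^sub>R W n \<or> Z n = (-1) *\<^sub>R W n" using ZW[of n] by auto
      then show "\<exists>a s. Z n = a *\<^sub>R s \<and> \<bar>a\<bar> \<le> 1 \<and> s \<in> Sl" using Wsl[of n] by fastforce
    qed
    then have "closure (convex hull (range Z)) \<subseteq> closure (aconv_R Sl)"
      unfolding aconv_R_def by (intro closure_mono hull_mono)
    moreover have "y \<in> cball 0 1" using xy by (simp add: dist_norm)
    ultimately have "y \<in> closure (aconv_R Sl)" by blast
    then have "infdist y (aconv_R Sl) < \<epsilon>" using e by (rule closure_infdist_lt)
    moreover have "h \<in> dualR" using h(1) unfolding dualR_def by simp
    moreover have "onorm h = 1"
    proof (rule antisym)
      show "onorm h \<le> 1" using h(2) by (intro onorm_bound) auto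
      show "1 \<le> onorm h" using le_onorm[OF h(1), of u] u by simp
    qed
    moreover have "x \<in> Sl" using xy h(4) sup1 e' unfolding Sl_def slice_def by (auto simp: dist_norm)
    ultimately show "\<exists>f\<in>dualR. onorm f = 1 \<and> x \<in> slice (cball 0 1) f \<epsilon> \<and>
            infdist y (aconv_R (slice (cball 0 1) f \<epsilon>)) < \<epsilon>"
      unfolding Sl_def by blast
  qed
qed



lemma scaleC_one [simp]: "scaleC (1::complex) x = (x::'a::cbanach)"
  using scaleC_of_real[of 1 x] by simp

lemma scaleC_zero_left [simp]: "scaleC (0::complex) x = (0::'a::cbanach)"
  using scaleC_of_real[of 0 x] by simp

lemma scaleC_real: "scaleC (complex_of_real r) x = r *\<^sub>R (x::'a::cbanach)"
  by (rule scaleC_of_real)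

lemma scaleC_zero_right [simp]: "scaleC c (0::'a::cbanach) = 0"
  using scaleC_add_right[of c 0 0] by simp

lemma scaleC_minus_right: "scaleC c (- x) = - scaleC c (x::'a::cbanach)"
  using scaleC_add_right[of c x "-x"] by (simp add: eq_neg_iff_add_eq_0 add.commute)

lemma scaleC_diff_right: "scaleC c (x - y) = scaleC c x - scaleC c (y::'a::cbanach)"
  using scaleC_add_right[of c x "-y"] scaleC_minus_right[of c y] by simp

lemma scaleC_scaleR: "scaleC c (r *\<^sub>R x) = r *\<^sub>R scaleC c (x::'a::cbanach)"
  by (metis mult.commute scaleC_real scaleC_scaleC)

lemma scaleC_decomp: "scaleC c x = Re c *\<^sub>R x + Im c *\<^sub>R scaleC \<i> (x::'a::cbanach)"
proof -
  have c: "c = complex_of_real (Re c) + \<i> * complex_of_real (Im c)" by (simp add: complex_eq_iff)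
  have "scaleC c x = scaleC (complex_of_real (Re c)) x + scaleC (\<i> * complex_of_real (Im c)) x"
    by (subst c) (rule scaleC_add_left)
  also have "\<dots> = Re c *\<^sub>R x + Im c *\<^sub>R scaleC \<i> x"
    by (simp add: scaleC_real scaleC_scaleC[symmetric] scaleC_scaleR)
  finally show ?thesis .
qed

interpretation cvs: vector_space "scaleC :: complex \<Rightarrow> 'a::cbanach \<Rightarrow> 'a"
  by unfold_locales (simp_all add: scaleC_add_right scaleC_add_left scaleC_scaleC)

lemma hb_C:
  fixes v :: "'a::cbanach"
  shows "\<exists>f\<in>dualC. (\<forall>x. cmod (f x) \<le> norm x) \<and> f v = complex_of_real (norm v)"
proof -
  obtain u where u: "bounded_linear u" "\<And>x. \<bar>u x\<bar> \<le> norm x" "u v = norm v"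
    using hahn_banach_norming[of v] by blast
  interpret u: bounded_linear u by fact
  define f where "f x = Complex (u x) (- u (scaleC \<i> x))" for x
  have ii: "scaleC \<i> (scaleC \<i> x) = - (x::'a)" for x
    using scaleC_real[of "-1" x] by (simp add: scaleC_scaleC)
  have fC: "f (scaleC c x) = c * f x" for c x
  proof -
    have "scaleC \<i> (scaleC c x) = Re c *\<^sub>R scaleC \<i> x - Im c *\<^sub>R x"
      unfolding scaleC_decomp[of c x] by (simp add: scaleC_add_right scaleC_scaleR ii)
    then have h1: "u (scaleC \<i> (scaleC c x)) = Re c * u (scaleC \<i> x) - Im c * u x"
      by (simp add: u.diff u.scale)
    have h2: "u (scaleC c x) = Re c * u x + Im c * u (scaleC \<i> x)"
      by (subst scaleC_decomp) (simp add: u.add u.scale)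
    show ?thesis unfolding f_def h1 h2
      by (simp add: complex_eq_iff algebra_simps)
  qed
  have fadd: "f (x + y) = f x + f y" for x y
    unfolding f_def by (simp add: scaleC_add_right u.add complex_eq_iff)
  have fbound: "cmod (f x) \<le> norm x" for x
  proof (cases "f x = 0")
    case True then show ?thesis by simp
  next
    case False
    define \<sigma> where "\<sigma> = cnj (f x) / complex_of_real (cmod (f x))"
    have s1: "cmod \<sigma> = 1" using False unfolding \<sigma>_def by (simp add: norm_divide)
    have cc: "cnj (f x) * f x = complex_of_real (cmod (f x)) * complex_of_real (cmod (f x))"
      using complex_norm_square[of "f x"] by (simp add: mult.commute power2_eq_square)
    have "\<sigma> * f x = complex_of_real (cmod (f x))"
      using False unfolding \<sigma>_def by (simp add: cc)
    then have "f (scaleC \<sigma> x) = complex_of_real (cmod (f x))" using fC by simp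
    then have "cmod (f x) = u (scaleC \<sigma> x)" unfolding f_def by (simp add: complex_eq_iff)
    also have "\<dots> \<le> norm (scaleC \<sigma> x)" using u(2) abs_le_iff by blast
    also have "\<dots> = norm x" using s1 norm_scaleC[of \<sigma> x] by simp
    finally show ?thesis .
  qed
  have bl: "bounded_linear f"
    by (rule bounded_linear_intro[where K = 1])
       (use fadd fbound fC[of "complex_of_real r" for r] in \<open>auto simp: scaleC_real scaleR_conv_of_real\<close>)
  have "f v = complex_of_real (norm v)"
  proof -
    have re: "Re (f v) = norm v" unfolding f_def using u(3) by simp
    have "(Re (f v))\<^sup>2 + (Im (f v))\<^sup>2 \<le> (norm v)\<^sup>2"
      using fbound[of v] by (metis cmod_power2 norm_ge_zero power_mono)
    then have "Im (f v) = 0" using re by simp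
    then show ?thesis using re by (simp add: complex_eq_iff)
  qed
  moreover have "f \<in> dualC" unfolding dualC_def using bl fC by simp
  ultimately show ?thesis using fbound by blast
qed


lemma adp_C:
  fixes g :: "'a::cbanach \<Rightarrow> complex"
  assumes adp: "alt_daugavet_C TYPE('a)" and gd: "g \<in> dualC" and e: "e > 0"
    and y: "norm y = 1" and \<eta>: "\<eta> > 0"
  shows "\<exists>z w. z \<in> slice (cball 0 1) (\<lambda>x. Re (g x)) e \<and> norm w \<le> 1 \<and>
           (\<exists>\<theta>. cmod \<theta> = 1 \<and> w = scaleC \<theta> z) \<and> norm (y + w) > 2 - \<eta>"
proof (cases "\<forall>x. g x = 0")
  case True
  then have "\<forall>x. Re (g x) = 0" by simp
  from slice_zero_fun[OF this e, of "cball 0 1"]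
  have "y \<in> slice (cball 0 1) (\<lambda>x. Re (g x)) e" using y by auto
  moreover have "norm (y + scaleC 1 y) = 2" using y by (simp add: scaleR_2[symmetric])
  ultimately show ?thesis using y \<eta>
    by (intro exI[of _ y] exI[of _ y]) (auto intro: exI[of _ 1])
next
  case False
  have g: "bounded_linear g" and gC: "\<And>c x. g (scaleC c x) = c * g x" using gd unfolding dualC_def by auto
  interpret g: bounded_linear g by fact
  define N where "N = onorm g"
  have Npos: "N > 0" using False onorm_eq_0[OF g] onorm_pos_le[OF g] N_def by auto
  have gN: "cmod (g x) \<le> N * norm x" for x using onorm[OF g, of x] N_def by simp
  obtain x1 where x1: "g x1 \<noteq> 0" using False by blast
  define k where "k x = g x / complex_of_real N" for x
  define T where "T x = scaleC (k x) y" for x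
  have kN: "cmod (k x) \<le> norm x" for x
    using gN[of x] Npos unfolding k_def by (simp add: divide_le_eq norm_divide mult.commute)
  have kC: "k (scaleC c x) = c * k x" for c x unfolding k_def gC by simp
  have kadd: "k (x + x') = k x + k x'" for x x' unfolding k_def by (simp add: g.add add_divide_distrib)
  have kR: "k (r *\<^sub>R x) = complex_of_real r * k x" for r x
    using kC[of "complex_of_real r" x] by (simp add: scaleC_real)
  have nT: "norm (T x) = cmod (k x)" for x unfolding T_def using y norm_scaleC[of "k x" y] by simp
  have blT: "bounded_linear T"
  proof (rule bounded_linear_intro[where K = 1])
    show "T (x + x') = T x + T x'" for x x' unfolding T_def kadd by (rule scaleC_add_left)
    show "T (r *\<^sub>R x) = r *\<^sub>R T x" for r x
      unfolding T_def kR scaleC_scaleC[symmetric] scaleC_real by (rule refl)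
    show "norm (T x) \<le> norm x * 1" for x using nT kN by simp
  qed
  have TC: "T (scaleC c x) = scaleC c (T x)" for c x unfolding T_def kC scaleC_scaleC by (rule refl)
  have rT: "range T = cvs.span {y}"
  proof
    show "range T \<subseteq> cvs.span {y}" unfolding T_def cvs.span_singleton by auto
    show "cvs.span {y} \<subseteq> range T"
    proof
      fix w assume "w \<in> cvs.span {y}"
      then obtain c where c: "w = scaleC c y" unfolding cvs.span_singleton by auto
      have k1: "k x1 \<noteq> 0" using x1 Npos unfolding k_def by simp
      have "T (scaleC (c / k x1) x1) = w"
        using k1 unfolding T_def c kC by simp
      then show "w \<in> range T" by (metis rangeI)
    qed
  qed
  have y0: "y \<noteq> 0" using y by auto
  have "cvs.dim {y} = 1"
    using cvs.dim_span_eq_card_independent[of "{y}"] cvs.independent_insert y0 by simp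
  then have dimT: "cvs.dim (range T) = 1" unfolding rT cvs.dim_span .
  have onT: "onorm T = 1"
  proof -
    have "onorm T = onorm k" unfolding onorm_def nT by simp
    also have "k = (\<lambda>x. (1 / N) *\<^sub>R g x)" unfolding k_def
      by (auto simp: scaleR_conv_of_real divide_inverse mult.commute)
    also have "onorm \<dots> = 1" using onorm_scaleR[OF g, of "1/N"] Npos N_def by simp
    finally show ?thesis .
  qed
  define \<eta>' where "\<eta>' = min (\<eta> / 2) (min 1 (e / N))"
  have \<eta>'p: "\<eta>' > 0" using \<eta> e Npos unfolding \<eta>'_def by simp
  have sup2: "(SUP \<theta>\<in>{\<theta>::complex. cmod \<theta> = 1}. onorm (\<lambda>x. x + scaleC \<theta> (T x))) = 2"
    using adp blT dimT onT TC unfolding alt_daugavet_C_def by simp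
  obtain \<theta> where \<theta>: "cmod \<theta> = 1" "onorm (\<lambda>x. x + scaleC \<theta> (T x)) > 2 - \<eta>'"
  proof (rule ccontr)
    assume "\<not> thesis"
    with that have "\<forall>\<theta>. cmod \<theta> = 1 \<longrightarrow> onorm (\<lambda>x. x + scaleC \<theta> (T x)) \<le> 2 - \<eta>'"
      by (meson not_less)
    then have "(SUP \<theta>\<in>{\<theta>::complex. cmod \<theta> = 1}. onorm (\<lambda>x. x + scaleC \<theta> (T x))) \<le> 2 - \<eta>'"
      by (intro cSUP_least) (auto intro: exI[of _ 1])
    then show False using sup2 \<eta>'p by simp
  qed
  define L where "L x = x + scaleC \<theta> (T x)" for x
  interpret T: bounded_linear T by fact
  interpret L: bounded_linear L
  proof (rule bounded_linear_intro[where K = 2])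
    show "L (x + x') = L x + L x'" for x x' unfolding L_def T.add scaleC_add_right by simp
    show "L (r *\<^sub>R x) = r *\<^sub>R L x" for r x unfolding L_def T.scale scaleC_scaleR
      by (simp add: scaleR_add_right)
    show "norm (L x) \<le> norm x * 2" for x
    proof -
      have "norm (L x) \<le> norm x + norm (scaleC \<theta> (T x))" unfolding L_def by (rule norm_triangle_ineq)
      also have "norm (scaleC \<theta> (T x)) = cmod (k x)" using \<theta>(1) norm_scaleC[of \<theta> "T x"] nT by simp
      finally show ?thesis using kN[of x] by simp
    qed
  qed
  obtain x where x: "norm (L x) > (2 - \<eta>') * norm x"
  proof (rule ccontr)
    assume "\<not> thesis"
    with that have "\<And>x. norm (L x) \<le> (2 - \<eta>') * norm x" by (meson not_less)
    then have "onorm L \<le> 2 - \<eta>'" using \<eta>'p unfolding \<eta>'_def by (intro onorm_bound) auto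
    then show False using \<theta> unfolding L_def by simp
  qed
  have x0: "x \<noteq> 0" using x by auto
  define u where "u = x /\<^sub>R norm x"
  have nu: "norm u = 1" using x0 unfolding u_def by simp
  have Lu: "norm (L u) > 2 - \<eta>'"
  proof -
    have "norm (L u) = norm (L x) / norm x" unfolding u_def L.scale by (simp add: divide_inverse mult.commute)
    then show ?thesis using x x0 by (simp add: less_divide_eq)
  qed
  define r where "r = cmod (k u)"
  have r1: "r \<le> 1" using kN[of u] nu r_def by simp
  have "norm (L u) \<le> 1 + r"
  proof -
    have "norm (L u) \<le> norm u + norm (scaleC \<theta> (T u))" unfolding L_def by (rule norm_triangle_ineq)
    also have "norm (scaleC \<theta> (T u)) = r" using \<theta>(1) norm_scaleC[of \<theta> "T u"] nT r_def by simp
    finally show ?thesis using nu by simp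
  qed
  then have r2: "r > 1 - \<eta>'" using Lu by simp
  then have rpos: "r > 0" using \<eta>'p unfolding \<eta>'_def by simp
  define \<sigma> where "\<sigma> = cnj (k u) / complex_of_real r"
  have s1: "cmod \<sigma> = 1" using rpos unfolding \<sigma>_def r_def by (simp add: norm_divide)
  have cc: "cnj (k u) * k u = complex_of_real r * complex_of_real r"
    using complex_norm_square[of "k u"] unfolding r_def by (simp add: mult.commute power2_eq_square)
  have sk: "\<sigma> * k u = complex_of_real r"
    using rpos unfolding \<sigma>_def by (simp add: cc)
  have s0: "\<sigma> \<noteq> 0" using s1 by auto
  define z where "z = scaleC \<sigma> u"
  have nz: "norm z = 1" using nu s1 norm_scaleC[of \<sigma> u] unfolding z_def by simp
  have kz: "k z = complex_of_real r" unfolding z_def kC sk ..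
  have zs: "z \<in> slice (cball 0 1) (\<lambda>x. Re (g x)) e"
  proof (rule Sup_le_slice[where N = N])
    show "Re (g x) \<le> N" if "norm x \<le> 1" for x
    proof -
      have "Re (g x) \<le> cmod (g x)" by (rule complex_Re_le_cmod)
      also have "\<dots> \<le> N * norm x" by (rule gN)
      also have "\<dots> \<le> N" using that Npos by (simp add: mult_left_le)
      finally show ?thesis .
    qed
    show "norm z \<le> 1" using nz by simp
    have "g z = complex_of_real N * k z" unfolding k_def using Npos by simp
    then have 1: "Re (g z) = N * r" unfolding kz by simp
    have 2: "N * r > N * (1 - \<eta>')" using r2 Npos by simp
    have 3: "N * (1 - \<eta>') \<ge> N - e"
    proof -
      have "\<eta>' \<le> e / N" unfolding \<eta>'_def by simp
      then have "N * \<eta>' \<le> e" using Npos by (simp add: le_divide_eq mult.commute)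
      then show ?thesis by (simp add: algebra_simps)
    qed
    show "Re (g z) > N - e" using 1 2 3 by linarith
  qed
  have uz: "u = scaleC (inverse \<sigma>) z" unfolding z_def scaleC_scaleC using s0 by simp
  have ku: "k u = inverse \<sigma> * complex_of_real r" using sk s0 by (simp add: field_simps)
  have Luz: "L u = scaleC (inverse \<sigma>) (z + scaleC (\<theta> * complex_of_real r) y)"
    unfolding L_def T_def ku scaleC_add_right scaleC_scaleC
    using uz by (simp add: mult.left_commute)
  have "norm (L u) = norm (z + scaleC (\<theta> * complex_of_real r) y)"
    unfolding Luz using norm_scaleC[of "inverse \<sigma>"] s1 by (simp add: norm_inverse)
  then have A: "norm (z + scaleC (\<theta> * complex_of_real r) y) > 2 - \<eta>'" using Lu by simp
  have B: "norm (z + scaleC \<theta> y) \<ge> norm (z + scaleC (\<theta> * complex_of_real r) y) - (1 - r)"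
  proof -
    have th: "\<theta> * complex_of_real r + \<theta> * complex_of_real (1 - r) = \<theta>"
      by (simp add: distrib_left[symmetric])
    have "scaleC \<theta> y = scaleC (\<theta> * complex_of_real r) y + scaleC (\<theta> * complex_of_real (1 - r)) y"
      unfolding scaleC_add_left[symmetric] th ..
    then have "z + scaleC (\<theta> * complex_of_real r) y = (z + scaleC \<theta> y) - scaleC (\<theta> * complex_of_real (1 - r)) y"
      by simp
    then have "norm (z + scaleC (\<theta> * complex_of_real r) y) \<le> norm (z + scaleC \<theta> y) + norm (scaleC (\<theta> * complex_of_real (1 - r)) y)"
      by (metis norm_triangle_ineq4)
    also have "norm (scaleC (\<theta> * complex_of_real (1 - r)) y) = 1 - r"
    proof -
      have "cmod (1 - complex_of_real r) = 1 - r"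
        using r1 by (metis abs_of_nonneg diff_ge_0_iff_ge norm_of_real of_real_1 of_real_diff)
      then show ?thesis using \<theta>(1) y norm_scaleC[of "\<theta> * complex_of_real (1 - r)" y] by (simp add: norm_mult)
    qed
    finally show ?thesis by simp
  qed
  have C: "norm (z + scaleC \<theta> y) > 2 - \<eta>" using A B r2 unfolding \<eta>'_def by simp
  have t0: "\<theta> \<noteq> 0" using \<theta>(1) by auto
  have D: "y + scaleC (inverse \<theta>) z = scaleC (inverse \<theta>) (z + scaleC \<theta> y)"
    unfolding scaleC_add_right scaleC_scaleC using t0 by (simp add: add.commute)
  have "norm (y + scaleC (inverse \<theta>) z) = norm (z + scaleC \<theta> y)"
    unfolding D using norm_scaleC[of "inverse \<theta>"] \<theta>(1) by (simp add: norm_inverse)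
  moreover have "norm (scaleC (inverse \<theta>) z) \<le> 1" using \<theta>(1) nz norm_scaleC[of "inverse \<theta>" z] by (simp add: norm_inverse)
  moreover have "cmod (inverse \<theta>) = 1" using \<theta>(1) by (simp add: norm_inverse)
  ultimately show ?thesis using zs C
    by (intro exI[of _ z] exI[of _ "scaleC (inverse \<theta>) z"]) auto
qed


lemma thm_C:
  "alt_daugavet_C TYPE('b::cbanach) \<and> SCD_set_C (cball (0::'b) 1) \<longrightarrow> lush_C TYPE('b)"
proof (intro impI, elim conjE)
  assume adp: "alt_daugavet_C TYPE('b)" and scd: "SCD_set_C (cball (0::'b) 1)"
  obtain f :: "nat \<Rightarrow> 'b \<Rightarrow> complex" and \<epsilon>n where fe: "\<forall>n. f n \<in> dualC \<and> \<epsilon>n n > 0"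
    and cov: "\<forall>B. B \<subseteq> cball 0 1 \<longrightarrow> (\<forall>n. B \<inter> slice (cball 0 1) (\<lambda>x. Re (f n x)) (\<epsilon>n n) \<noteq> {})
              \<longrightarrow> cball 0 1 \<subseteq> closure (convex hull B)"
    using scd unfolding SCD_set_C_def by blast
  show "lush_C TYPE('b)"
    unfolding lush_C_def
  proof (intro allI impI)
    fix x y :: 'b and \<epsilon> :: real
    assume xy: "norm x = 1 \<and> norm y = 1" and e: "\<epsilon> > 0"
    define e' where "e' = min \<epsilon> 1"
    have e': "0 < e'" "e' \<le> 1" "e' \<le> \<epsilon>" using e unfolding e'_def by auto
    define S where "S n = slice (cball 0 1) (\<lambda>x. Re (f n x)) (\<epsilon>n n)" for n
    define Q where "Q h = (h \<in> dualC \<and> (\<forall>x. cmod (h x) \<le> norm x))" for h :: "'b \<Rightarrow> complex"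
    define G where "G h = (\<lambda>x. Re (h x))" for h :: "'b \<Rightarrow> complex"
    have HB: "\<exists>h. Q h \<and> bounded_linear (G h) \<and> (\<forall>x. \<bar>G h x\<bar> \<le> norm x) \<and> G h v = norm v"
      if "v \<noteq> 0" for v :: 'b
    proof -
      obtain h where h: "h \<in> dualC" "\<And>x. cmod (h x) \<le> norm x" "h v = complex_of_real (norm v)"
        using hb_C[of v] by blast
      have "bounded_linear (G h)" unfolding G_def
        using h(1) unfolding dualC_def by (auto intro: bounded_linear_compose[OF bounded_linear_Re])
      moreover have "\<bar>G h x\<bar> \<le> norm x" for x
        unfolding G_def using abs_Re_le_cmod[of "h x"] h(2)[of x] by linarith
      ultimately show ?thesis using h unfolding Q_def G_def by auto
    qed
    define R where "R z w = (\<exists>\<theta>. cmod \<theta> = 1 \<and> w = scaleC \<theta> z)" for z w :: 'b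
    have ADP: "\<exists>z w. z \<in> S n \<and> norm w \<le> 1 \<and> R z w \<and> norm (y' + w) > 2 - \<eta>"
      if "norm y' = 1" "\<eta> > 0" for y' n \<eta>
      unfolding S_def R_def using adp_C[OF adp _ _ that(1) that(2), of "f n" "\<epsilon>n n"] fe
      by simp
    obtain h where h: "Q h" "bounded_linear (G h)" "\<And>x. \<bar>G h x\<bar> \<le> norm x" "\<exists>u. norm u = 1 \<and> G h u = 1"
      "G h x > 1 - e'" and hn: "\<forall>n. \<exists>z w. z \<in> S n \<and> R z w \<and> norm w \<le> 1 \<and> G h w > 1 - e'"
      using core[where Q = Q and G = G and S = S and R = R, OF HB ADP _ e'(1) e'(2), of x] xy by auto
    obtain u where u: "norm u = 1" "G h u = 1" using h(4) by blast
    have sup1: "Sup ((\<lambda>x. Re (h x)) ` cball 0 1) = 1"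
      using slice_sup_one[of "G h", OF h(3) u] unfolding G_def .
    from hn obtain Z W where ZW: "\<And>n. Z n \<in> S n \<and> R (Z n) (W n) \<and> norm (W n) \<le> 1 \<and> G h (W n) > 1 - e'"
      by metis
    define Sl where "Sl = slice (cball 0 1) (\<lambda>x. Re (h x)) \<epsilon>"
    have Wsl: "W n \<in> Sl" for n using ZW[of n] sup1 e' unfolding Sl_def slice_def G_def by (auto simp: dist_norm)
    have ZB: "range Z \<subseteq> cball 0 1" using ZW unfolding S_def slice_def by auto
    have "range Z \<inter> slice (cball 0 1) (\<lambda>x. Re (f n x)) (\<epsilon>n n) \<noteq> {}" for n
      using ZW[of n] unfolding S_def by blast
    then have "cball 0 1 \<subseteq> closure (convex hull (range Z))"
      using cov ZB by blast
    moreover have "range Z \<subseteq> {scaleC a s | a s. cmod a \<le> 1 \<and> s \<in> Sl}"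
    proof clarify
      fix n
      obtain \<theta> where \<theta>: "cmod \<theta> = 1" "W n = scaleC \<theta> (Z n)" using ZW[of n] unfolding R_def by blast
      have "\<theta> \<noteq> 0" using \<theta> by auto
      then have "Z n = scaleC (inverse \<theta>) (W n)" unfolding \<theta>(2) scaleC_scaleC by simp
      moreover have "cmod (inverse \<theta>) \<le> 1" using \<theta> by (simp add: norm_inverse)
      ultimately show "\<exists>a s. Z n = scaleC a s \<and> cmod a \<le> 1 \<and> s \<in> Sl" using Wsl[of n] by blast
    qed
    then have "closure (convex hull (range Z)) \<subseteq> closure (aconv_C Sl)"
      unfolding aconv_C_def by (intro closure_mono hull_mono)
    moreover have "y \<in> cball 0 1" using xy by (simp add: dist_norm)
    ultimately have "y \<in> closure (aconv_C Sl)" by blast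
    then have "infdist y (aconv_C Sl) < \<epsilon>" using e by (rule closure_infdist_lt)
    moreover have "h \<in> dualC" using h(1) unfolding Q_def by simp
    moreover have "onorm h = 1"
    proof (rule antisym)
      have hb: "bounded_linear h" using h(1) unfolding Q_def dualC_def by simp
      show "onorm h \<le> 1" using h(1) unfolding Q_def by (intro onorm_bound) auto
      have "1 \<le> cmod (h u)" using u(2) complex_Re_le_cmod[of "h u"] unfolding G_def by simp
      then show "1 \<le> onorm h" using le_onorm[OF hb, of u] u by simp
    qed
    moreover have "x \<in> Sl" using xy h(5) sup1 e' unfolding Sl_def slice_def G_def by (auto simp: dist_norm)
    ultimately show "\<exists>f\<in>dualC. onorm f = 1 \<and> x \<in> slice (cball 0 1) (\<lambda>z. Re (f z)) \<epsilon> \<and>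
            infdist y (aconv_C (slice (cball 0 1) (\<lambda>z. Re (f z)) \<epsilon>)) < \<epsilon>"
      unfolding Sl_def by blast
  qed
qed


theorem theorem4p4:
  shows "(alt_daugavet_R TYPE('a::banach) \<and> SCD_set_R (cball (0::'a) 1)
            \<longrightarrow> lush_R TYPE('a))
       \<and> (alt_daugavet_C TYPE('b::cbanach) \<and> SCD_set_C (cball (0::'b) 1)
            \<longrightarrow> lush_C TYPE('b))"
  using thm_R thm_C by blast

end
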